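(* Let $G$ be a connected graph with adjacency matrix $A$ and positive degrees, and let $e=(i,j)$, $i\ne j$, $a_{ij}>0$, be a cut-edge of $G$. Then for every $r>0$, \[ c_r(e)\le r^{-1}. \]
   Context: Graphs are undirected and possibly weighted on vertex set $\{1,\dots,n\}$, with symmetric nonnegative adjacency matrix $A=(a_{k\ell})$; $d=A\mathbf 1$, $D=\mathrm{diag}(d)$, $\|d\|_1=\sum_kd_k$, $D^{\pm1/2}=\mathrm{diag}(d_k^{\pm1/2})$; $e_k$ is the $k$-th column of the identity and $\mathbf 1$ the all-ones vector. The edge $e$ is a cut-edge if deleting it disconnects $G$. With $v=e_i-e_j$ and $\widehat A=A+a_{ij}vv^T$ (deleting edge $e$ and adding loops of weight $a_{ij}$ at $i$ and $j$; $\widehat A\mathbf 1=d$). For $r>0$ and symmetric nonnegative $B$ with $B\mathbf 1=d$, $K_r(B)=\operatorname{Tr}\Big(\big((1+r)I-D^{-1/2}BD^{-1/2}+\tfrac{1}{\|d\|_1}D^{1/2}\mathbf 1\mathbf 1^TD^{1/2}\big)^{-1}\Big)-(1+r)^{-1}$; the regularized score is $c_r(e)=K_r(\widehat A)-K_r(A)$. *)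

theory Defs
  imports "HOL-Analysis.Analysis"
begin

text \<open>Weighted undirected graphs on a finite vertex type 'n, given by a real matrix.\<close>

definition deg :: "real^'n^'n \<Rightarrow> real^'n" where
  "deg B = B *v (\<chi> k. 1)"

definition graph_connected :: "real^'n^'n \<Rightarrow> bool" where
  "graph_connected B \<longleftrightarrow> (\<forall>k l. (k, l) \<in> {(x, y). B $ x $ y > 0}\<^sup>*)"

definition delete_edge :: "real^'n^'n \<Rightarrow> 'n \<Rightarrow> 'n \<Rightarrow> real^'n^'n" where
  "delete_edge B i j = (\<chi> k l. if (k = i \<and> l = j) \<or> (k = j \<and> l = i) then 0 else B $ k $ l)"

definition is_cut_edge :: "real^'n^'n \<Rightarrow> 'n \<Rightarrow> 'n \<Rightarrow> bool" where
  "is_cut_edge B i j \<longleftrightarrow> B $ i $ j > 0 \<and> graph_connected B \<and> \<not> graph_connected (delete_edge B i j)"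

definition A_hat :: "real^'n^'n \<Rightarrow> 'n \<Rightarrow> 'n \<Rightarrow> real^'n^'n" where
  "A_hat B i j = (let v = axis i (1::real) - axis j 1 in
     (\<chi> k l. B $ k $ l + B $ i $ j * (v $ k * v $ l)))"

text \<open>K_r(B), where d = deg of the given matrix (for hat A, deg (hat A) = deg A).\<close>
definition Kreg :: "real \<Rightarrow> real^'n^'n \<Rightarrow> real" where
  "Kreg r B = (let d = deg B;
      Dm = (\<chi> k l. if k = l then 1 / sqrt (d $ k) else 0) :: real^'n^'n;
      s = (\<chi> k. sqrt (d $ k)) :: real^'n;
      M = (1 + r) *\<^sub>R mat 1 - Dm ** B ** Dm
          + (1 / (\<Sum>k\<in>UNIV. d $ k)) *\<^sub>R (\<chi> k l. s $ k * s $ l)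
    in trace (matrix_inv M) - 1 / (1 + r))"

definition c_score :: "real \<Rightarrow> real^'n^'n \<Rightarrow> 'n \<Rightarrow> 'n \<Rightarrow> real" where
  "c_score r A i j = Kreg r (A_hat A i j) - Kreg r A"

end

theory Submission imports Defs begin

lemma inv_props:
  fixes M :: "real^'n^'n"
  assumes "invertible M"
  shows "M ** matrix_inv M = mat 1" "matrix_inv M ** M = mat 1"
  using someI_ex[OF assms[unfolded invertible_def]] unfolding matrix_inv_def by auto

lemma invertible_of_psd:
  fixes M :: "real^'n^'n"
  assumes r: "r > 0" and psd: "\<forall>x. r * (x \<bullet> x) \<le> x \<bullet> (M *v x)"
  shows "invertible M"
proof -
  have "\<forall>x. M *v x = 0 \<longrightarrow> x = 0"
  proof (intro allI impI)
    fix x assume "M *v x = 0"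
    with psd have "r * (x \<bullet> x) \<le> 0" by (metis inner_zero_right)
    with r have "x \<bullet> x \<le> 0" by (simp add: mult_le_0_iff)
    then show "x = 0" by (metis inner_ge_zero inner_eq_zero_iff order_antisym)
  qed
  then show ?thesis
    using matrix_left_invertible_ker invertible_left_inverse by blast
qed

lemma outer_mv: "(\<chi> k l. (w::real^'n) $ k * w $ l) *v y = (w \<bullet> y) *\<^sub>R w"
  by (simp add: vec_eq_iff matrix_vector_mult_def inner_vec_def sum_distrib_left mult_ac)

lemma dot_mv_transpose: "((A::real^'n^'n) *v x) \<bullet> y = x \<bullet> (transpose A *v y)"
  by (metis dot_lmul_matrix inner_commute transpose_matrix_vector vector_transpose_matrix)

lemma trace_outer: "trace (Z ** (\<chi> k l. (w::real^'n) $ k * w $ l)) = (Z *v w) \<bullet> w"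
  by (simp add: trace_def matrix_matrix_mult_def matrix_vector_mult_def inner_vec_def sum_distrib_left mult_ac)

lemma mm_sub_l: "(A::real^'n^'n) ** (B - C) = A ** B - A ** C"
  by (simp add: vec_eq_iff matrix_matrix_mult_def sum_subtractf algebra_simps)
lemma mm_sub_r: "((B::real^'n^'n) - C) ** A = B ** A - C ** A"
  by (simp add: vec_eq_iff matrix_matrix_mult_def sum_subtractf algebra_simps)
lemma mm_scaleR_l: "(c *\<^sub>R (A::real^'n^'n)) ** B = c *\<^sub>R (A ** B)"
  by (simp add: vec_eq_iff matrix_matrix_mult_def sum_distrib_left algebra_simps)
lemma mm_scaleR_r: "(A::real^'n^'n) ** (c *\<^sub>R B) = c *\<^sub>R (A ** B)"
  by (simp add: vec_eq_iff matrix_matrix_mult_def sum_distrib_left algebra_simps)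
lemma trace_scaleR: "trace (c *\<^sub>R (A::real^'n^'n)) = c * trace A"
  by (simp add: trace_def sum_distrib_left)

lemma core:
  fixes M :: "real^'n^'n" and w :: "real^'n"
  assumes symM: "transpose M = M" and r: "r > 0" and a: "a > 0" and w: "w \<noteq> 0"
    and psdM: "\<forall>x. r * (x \<bullet> x) \<le> x \<bullet> (M *v x)"
    and psd: "\<forall>x. r * (x \<bullet> x) \<le> x \<bullet> ((M - a *\<^sub>R (\<chi> k l. w $ k * w $ l)) *v x)"
  shows "trace (matrix_inv (M - a *\<^sub>R (\<chi> k l. w $ k * w $ l))) - trace (matrix_inv M) \<le> 1 / r"
proof -
  define W :: "real^'n^'n" where "W = (\<chi> k l. w $ k * w $ l)"
  define Mh where "Mh = M - a *\<^sub>R W"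
  have invM: "invertible M" using invertible_of_psd[OF r psdM] .
  have invMh: "invertible Mh" using invertible_of_psd[OF r] psd unfolding Mh_def W_def by blast
  define X where "X = matrix_inv M"
  define Y where "Y = matrix_inv Mh"
  have MX: "M ** X = mat 1" and XM: "X ** M = mat 1" using inv_props[OF invM] X_def by auto
  have YMh: "Y ** Mh = mat 1" and MhY: "Mh ** Y = mat 1" using inv_props[OF invMh] Y_def by auto
  have symX: "transpose X = X"
  proof -
    have "M ** transpose X = mat 1"
      using arg_cong[OF XM, of transpose] by (simp add: matrix_transpose_mul symM)
    then have "X ** (M ** transpose X) = X" by simp
    then show ?thesis using XM by (simp add: matrix_mul_assoc)
  qed
  define x where "x = X *v w"
  define t where "t = w \<bullet> x"
  define q where "q = x \<bullet> x"
  have Mx: "M *v x = w" unfolding x_def by (simp add: matrix_vector_mul_assoc MX)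
  have Mhx: "Mh *v x = (1 - a * t) *\<^sub>R w"
    unfolding Mh_def W_def
    by (simp add: matrix_vector_mult_diff_rdistrib Mx outer_mv t_def scaleR_matrix_vector_assoc[symmetric] algebra_simps)
  have xw: "x \<bullet> w = t" unfolding t_def by (simp add: inner_commute)
  have key: "r * q \<le> t - a * t^2"
  proof -
    have "r * q \<le> x \<bullet> (Mh *v x)" using psd unfolding q_def Mh_def W_def by blast
    also have "\<dots> = t - a * t^2" using xw by (simp add: Mhx algebra_simps power2_eq_square)
    finally show ?thesis .
  qed
  have "x \<noteq> 0" using Mx w by auto
  then have q: "q > 0" unfolding q_def by simp
  have t1: "0 < 1 - a * t"
  proof -
    have "0 < r * q" using r q by simp
    then have p: "0 < t * (1 - a * t)" using key by (simp add: power2_eq_square algebra_simps)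
    show ?thesis
    proof (rule ccontr)
      assume "\<not> 0 < 1 - a * t"
      then have "a * t \<ge> 1" by simp
      have "t > 0"
      proof (rule ccontr)
        assume "\<not> t > 0"
        then have "a * t \<le> 0" using a by (simp add: mult_nonneg_nonpos)
        with \<open>a * t \<ge> 1\<close> show False by simp
      qed
      then have "t * (1 - a * t) \<le> 0" using \<open>a * t \<ge> 1\<close> by (simp add: mult_nonneg_nonpos)
      with p show False by simp
    qed
  qed
  have Yw: "Y *v w = (1 / (1 - a * t)) *\<^sub>R x"
  proof -
    have "x = Y *v (Mh *v x)" by (simp add: matrix_vector_mul_assoc YMh)
    also have "\<dots> = (1 - a * t) *\<^sub>R (Y *v w)" by (simp add: Mhx matrix_vector_mult_scaleR)
    finally show ?thesis using t1 by simp
  qed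
  have diff: "Y - X = a *\<^sub>R ((Y ** W) ** X)"
  proof -
    have "Y ** (M - Mh) ** X = Y ** M ** X - Y ** Mh ** X"
      by (simp add: mm_sub_l mm_sub_r)
    also have "\<dots> = Y - X"
      by (simp add: YMh flip: matrix_mul_assoc) (simp add: MX)
    finally show ?thesis by (simp add: Mh_def mm_scaleR_l mm_scaleR_r)
  qed
  have tr: "trace Y - trace X = a * q / (1 - a * t)"
  proof -
    have "trace Y - trace X = a * trace (X ** (Y ** W))"
      using diff by (metis trace_sub trace_mul_sym trace_scaleR)
    also have "trace (X ** (Y ** W)) = trace ((X ** Y) ** W)" by (simp add: matrix_mul_assoc)
    also have "\<dots> = ((X ** Y) *v w) \<bullet> w" unfolding W_def by (rule trace_outer)
    also have "\<dots> = (1 / (1 - a * t)) * ((X *v x) \<bullet> w)"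
      by (simp flip: matrix_vector_mul_assoc add: Yw matrix_vector_mult_scaleR)
    also have "(X *v x) \<bullet> w = q" unfolding q_def
      by (simp add: dot_mv_transpose symX x_def[symmetric])
    finally show ?thesis by simp
  qed
  have "a * q \<le> (1 - a * t) / r"
  proof -
    have "a * (r * q) \<le> a * (t - a * t^2)" using key a by (simp add: mult_left_mono)
    then have "r * (a * q) \<le> (a * t) * (1 - a * t)" by (simp add: power2_eq_square algebra_simps)
    also have "\<dots> \<le> 1 * (1 - a * t)" using t1
      by (intro mult_right_mono) auto
    finally show ?thesis using r by (simp add: field_simps)
  qed
  then have "a * q / (1 - a * t) \<le> 1 / r" using t1
    by (simp add: pos_divide_le_eq mult.commute)
  then show ?thesis using tr unfolding Y_def X_def Mh_def W_def by simp
qed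


lemma DBD:
  fixes B :: "real^'n^'n" and d :: "real^'n"
  shows "(\<chi> k l. if k = l then 1 / sqrt (d $ k) else 0) ** B ** (\<chi> k l. if k = l then 1 / sqrt (d $ k) else 0)
     = (\<chi> k l. B $ k $ l / (sqrt (d $ k) * sqrt (d $ l)))"
proof -
  have h1: "(\<Sum>k\<in>UNIV. (if i = k then c k else 0) * g k) = c i * (g i :: real)" for i :: 'n and c g
  proof -
    have e: "(\<lambda>k. (if i = k then c k else 0) * g k) = (\<lambda>k. if i = k then c k * g k else 0)" (is "?l = ?r") by auto
    show ?thesis by (subst e) (simp add: sum.delta')
  qed
  have h2: "(\<Sum>k\<in>UNIV. g k * (if k = l then c k else 0)) = g l * (c l :: real)" for l :: 'n and c g
  proof -
    have e: "(\<lambda>k. g k * (if k = l then c k else 0)) = (\<lambda>k. if l = k then g k * c k else 0)" (is "?l = ?r") by auto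
    show ?thesis by (subst e) (simp add: sum.delta')
  qed
  show ?thesis by (simp only: vec_eq_iff matrix_matrix_mult_def vec_lambda_beta h1 h2) simp
qed

lemma quad_le:
  fixes B :: "real^'n^'n" and x :: "real^'n"
  assumes sym: "\<forall>k l. B $ k $ l = B $ l $ k" and nonneg: "\<forall>k l. 0 \<le> B $ k $ l"
    and dpos: "\<forall>k. deg B $ k > 0"
  shows "x \<bullet> ((\<chi> k l. B $ k $ l / (sqrt (deg B $ k) * sqrt (deg B $ l))) *v x) \<le> x \<bullet> x"
proof -
  define d where "d = deg B"
  have dk: "d $ k = (\<Sum>l\<in>UNIV. B $ k $ l)" for k
    unfolding d_def deg_def by (simp add: matrix_vector_mult_def)
  define y where "y k = x $ k / sqrt (d $ k)" for k
  have "x \<bullet> ((\<chi> k l. B $ k $ l / (sqrt (d $ k) * sqrt (d $ l))) *v x)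
        = (\<Sum>k\<in>UNIV. \<Sum>l\<in>UNIV. B $ k $ l * y k * y l)"
    by (simp add: inner_vec_def matrix_vector_mult_def sum_distrib_left y_def algebra_simps)
  also have "\<dots> \<le> (\<Sum>k\<in>UNIV. \<Sum>l\<in>UNIV. B $ k $ l * (y k ^ 2 + y l ^ 2) / 2)"
  proof (intro sum_mono)
    fix k l
    have "2 * (y k * y l) \<le> y k ^ 2 + y l ^ 2" using sum_squares_bound[of "y k" "y l"] by simp
    then have "B $ k $ l * (2 * (y k * y l)) \<le> B $ k $ l * (y k ^ 2 + y l ^ 2)"
      using nonneg by (simp add: mult_left_mono)
    then show "B $ k $ l * y k * y l \<le> B $ k $ l * (y k ^ 2 + y l ^ 2) / 2" by (simp add: algebra_simps)
  qed
  also have "\<dots> = (\<Sum>k\<in>UNIV. \<Sum>l\<in>UNIV. B $ k $ l * y k ^ 2) / 2 + (\<Sum>k\<in>UNIV. \<Sum>l\<in>UNIV. B $ k $ l * y l ^ 2) / 2"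
    by (simp add: sum.distrib sum_divide_distrib algebra_simps add_divide_distrib)
  also have "(\<Sum>k\<in>UNIV. \<Sum>l\<in>UNIV. B $ k $ l * y l ^ 2) = (\<Sum>k\<in>UNIV. d $ k * y k ^ 2)"
  proof -
    have "(\<Sum>k\<in>UNIV. \<Sum>l\<in>UNIV. B $ k $ l * y l ^ 2) = (\<Sum>l\<in>UNIV. \<Sum>k\<in>UNIV. B $ l $ k * y l ^ 2)"
      by (subst sum.swap) (simp add: sym)
    also have "\<dots> = (\<Sum>k\<in>UNIV. d $ k * y k ^ 2)"
      by (simp add: dk sum_distrib_right)
    finally show ?thesis .
  qed
  also have "(\<Sum>k\<in>UNIV. \<Sum>l\<in>UNIV. B $ k $ l * y k ^ 2) = (\<Sum>k\<in>UNIV. d $ k * y k ^ 2)"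
    by (simp add: dk sum_distrib_right)
  also have "(\<Sum>k\<in>UNIV. d $ k * y k ^ 2) / 2 + (\<Sum>k\<in>UNIV. d $ k * y k ^ 2) / 2 = (\<Sum>k\<in>UNIV. d $ k * y k ^ 2)"
    by simp
  also have "(\<Sum>k\<in>UNIV. d $ k * y k ^ 2) = x \<bullet> x"
  proof -
    have "d $ k * y k ^ 2 = x $ k * x $ k" for k
      using dpos[rule_format, of k] unfolding y_def d_def
      by (simp add: power_divide power2_eq_square[symmetric] less_imp_le)
    then show ?thesis by (simp add: inner_vec_def)
  qed
  finally show ?thesis unfolding d_def by simp
qed


definition Dmat :: "real^'n \<Rightarrow> real^'n^'n" where
  "Dmat d = (\<chi> k l. if k = l then 1 / sqrt (d $ k) else 0)"
definition svec :: "real^'n \<Rightarrow> real^'n" where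
  "svec d = (\<chi> k. sqrt (d $ k))"
definition Mof :: "real \<Rightarrow> real^'n \<Rightarrow> real^'n^'n \<Rightarrow> real^'n^'n" where
  "Mof r d B = (1 + r) *\<^sub>R mat 1 - Dmat d ** B ** Dmat d
     + (1 / (\<Sum>k\<in>UNIV. d $ k)) *\<^sub>R (\<chi> k l. svec d $ k * svec d $ l)"

lemma Kreg_eq: "Kreg r B = trace (matrix_inv (Mof r (deg B) B)) - 1 / (1 + r)"
  unfolding Kreg_def Mof_def Dmat_def svec_def Let_def by simp

lemma psd_gen:
  fixes B :: "real^'n^'n"
  assumes sym: "\<forall>k l. B $ k $ l = B $ l $ k" and nonneg: "\<forall>k l. 0 \<le> B $ k $ l"
    and dpos: "\<forall>k. deg B $ k > 0"
  shows "r * (x \<bullet> x) \<le> x \<bullet> (Mof r (deg B) B *v x)"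
proof -
  define c where "c = 1 / (\<Sum>k\<in>UNIV. deg B $ k)"
  have c: "c \<ge> 0" unfolding c_def using dpos by (simp add: sum_nonneg less_imp_le)
  have N: "Dmat (deg B) ** B ** Dmat (deg B) = (\<chi> k l. B $ k $ l / (sqrt (deg B $ k) * sqrt (deg B $ l)))"
    unfolding Dmat_def by (rule DBD)
  have "x \<bullet> (Mof r (deg B) B *v x) = (1 + r) * (x \<bullet> x) - x \<bullet> ((Dmat (deg B) ** B ** Dmat (deg B)) *v x)
      + c * ((svec (deg B) \<bullet> x) * (svec (deg B) \<bullet> x))"
    unfolding Mof_def c_def
    by (simp add: matrix_vector_mult_diff_rdistrib matrix_vector_mult_add_rdistrib
        scaleR_matrix_vector_assoc[symmetric] outer_mv inner_diff_right inner_add_right inner_commute)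
  moreover have "x \<bullet> ((Dmat (deg B) ** B ** Dmat (deg B)) *v x) \<le> x \<bullet> x"
    unfolding N using quad_le[OF sym nonneg dpos] .
  moreover have "0 \<le> c * ((svec (deg B) \<bullet> x) * (svec (deg B) \<bullet> x))" using c by simp
  ultimately show ?thesis by (simp add: algebra_simps)
qed

lemma Mof_sym:
  fixes B :: "real^'n^'n"
  assumes sym: "\<forall>k l. B $ k $ l = B $ l $ k"
  shows "transpose (Mof r d B) = Mof r d B"
proof -
  have N: "Dmat d ** B ** Dmat d = (\<chi> k l. B $ k $ l / (sqrt (d $ k) * sqrt (d $ l)))"
    unfolding Dmat_def by (rule DBD)
  show ?thesis unfolding Mof_def N
    by (simp add: vec_eq_iff transpose_def mat_def sym mult.commute)
qed


theorem theorem10: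
  fixes A :: "real^'n^'n" and i j :: 'n and r :: real
  assumes sym: "transpose A = A"
    and nonneg: "\<forall>k l. 0 \<le> A $ k $ l"
    and deg_pos: "\<forall>k. deg A $ k > 0"
    and conn: "graph_connected A"
    and ij: "i \<noteq> j"
    and aij: "A $ i $ j > 0"
    and cut: "is_cut_edge A i j"
    and r: "r > 0"
  shows "c_score r A i j \<le> 1 / r"
proof -
  define a where "a = A $ i $ j"
  define v :: "real^'n" where "v = axis i 1 - axis j 1"
  define d where "d = deg A"
  define Ah where "Ah = A_hat A i j"
  have symA: "\<forall>k l. A $ k $ l = A $ l $ k"
    using sym by (metis transpose_def vec_lambda_beta)
  have vk: "v $ k = (if k = i then 1 else 0) - (if k = j then 1 else 0)" for k
    unfolding v_def by (simp add: axis_def)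
  have Ah: "Ah $ k $ l = A $ k $ l + a * (v $ k * v $ l)" for k l
    unfolding Ah_def A_hat_def a_def v_def Let_def by simp
  have sumv: "(\<Sum>l\<in>UNIV. v $ l) = 0"
    by (simp add: vk sum_subtractf)
  have degAh: "deg Ah = d"
  proof -
    have "(\<Sum>l\<in>UNIV. Ah $ k $ l) = (\<Sum>l\<in>UNIV. A $ k $ l)" for k
    proof -
      have "(\<Sum>l\<in>UNIV. Ah $ k $ l) = (\<Sum>l\<in>UNIV. A $ k $ l) + a * v $ k * (\<Sum>l\<in>UNIV. v $ l)"
        by (simp add: Ah sum.distrib sum_distrib_left mult.assoc)
      then show ?thesis using sumv by simp
    qed
    then show ?thesis unfolding d_def deg_def by (simp add: vec_eq_iff matrix_vector_mult_def)
  qed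
  have symAh: "\<forall>k l. Ah $ k $ l = Ah $ l $ k" using symA by (simp add: Ah mult.commute)
  have nonnegAh: "\<forall>k l. 0 \<le> Ah $ k $ l"
  proof (intro allI)
    fix k l
    show "0 \<le> Ah $ k $ l"
    proof (cases "(k = i \<and> l = j) \<or> (k = j \<and> l = i)")
      case True
      then have "A $ k $ l = a" using symA a_def by auto
      then show ?thesis using True ij by (auto simp: Ah vk)
    next
      case False
      have "v $ k * v $ l \<ge> 0" using False ij by (auto simp: vk)
      then show ?thesis using nonneg aij a_def by (simp add: Ah)
    qed
  qed
  have dpos: "\<forall>k. deg Ah $ k > 0" using degAh deg_pos d_def by simp
  define w :: "real^'n" where "w = (\<chi> k. v $ k / sqrt (d $ k))"
  define W :: "real^'n^'n" where "W = (\<chi> k l. w $ k * w $ l)"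
  have MAh: "Mof r d Ah = Mof r d A - a *\<^sub>R W"
  proof -
    have "Dmat d ** Ah ** Dmat d = Dmat d ** A ** Dmat d + a *\<^sub>R W"
      unfolding Dmat_def DBD W_def w_def by (simp add: vec_eq_iff Ah add_divide_distrib)
    then show ?thesis unfolding Mof_def by (simp add: algebra_simps)
  qed
  have cs: "c_score r A i j = trace (matrix_inv (Mof r d A - a *\<^sub>R W)) - trace (matrix_inv (Mof r d A))"
    unfolding c_score_def Kreg_eq Ah_def[symmetric] degAh MAh[symmetric] by (simp add: d_def)
  have w0: "w \<noteq> 0"
  proof
    assume "w = 0"
    then have "w $ i = 0" by simp
    moreover have "w $ i = 1 / sqrt (d $ i)" unfolding w_def using ij by (simp add: vk)
    moreover have "d $ i > 0" using deg_pos d_def by simp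
    ultimately show False by simp
  qed
  have psdA: "\<forall>x. r * (x \<bullet> x) \<le> x \<bullet> (Mof r d A *v x)"
    using psd_gen[OF symA nonneg deg_pos] d_def by blast
  have psdAh: "\<forall>x. r * (x \<bullet> x) \<le> x \<bullet> ((Mof r d A - a *\<^sub>R W) *v x)"
  proof
    fix x show "r * (x \<bullet> x) \<le> x \<bullet> ((Mof r d A - a *\<^sub>R W) *v x)"
      using psd_gen[OF symAh nonnegAh dpos, of r x] unfolding degAh MAh .
  qed
  show ?thesis unfolding cs W_def
    by (rule core[OF Mof_sym[OF symA] r _ w0 psdA psdAh[unfolded W_def]]) (simp add: a_def aij)
qed

end
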